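(* Let $G$ and $H$ be ordered graphs, each with at least $3$ vertices and each with $m$ edges. Suppose $G$ is $3$-connected, $H$ has no isolated vertices, and $M_{1,G}=M_{1,H}$. Then there is a bijection $\sigma$ from the vertices of $G$ to the vertices of $H$ such that for every $k$, if the $k$-th edge of $G$ is $\{i,j\}$ then the $k$-th edge of $H$ is $\{\sigma(i),\sigma(j)\}$.
   Context: An ordered graph is a finite vertex set with an ordered sequence $(E_1,\dots,E_m)$ of distinct unordered pairs of distinct vertices. For a configuration $\mathbf p$ assigning a number $\mathbf p_i\in\mathbb C$ to each vertex, $m_G(\mathbf p)\in\mathbb C^m$ has $k$-th coordinate $(\mathbf p_i-\mathbf p_j)^2$ with $E_k=\{i,j\}$. $M_{1,G}\subseteq\mathbb C^m$ is the Zariski closure of the image of $m_G$ over all such configurations. *)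

theory Defs
  imports Complex_Main
begin

text \<open>An ordered graph: finite vertex set V and an edge list E of pairs (i,j);
  the k-th edge is the unordered pair {i,j}.\<close>
definition ordered_graph :: "'a set \<Rightarrow> ('a \<times> 'a) list \<Rightarrow> bool" where
  "ordered_graph V E \<longleftrightarrow> finite V \<and>
     (\<forall>(i,j) \<in> set E. i \<in> V \<and> j \<in> V \<and> i \<noteq> j) \<and>
     distinct (map (\<lambda>(i,j). {i,j}) E)"

definition meas_map :: "('a \<times> 'a) list \<Rightarrow> ('a \<Rightarrow> complex) \<Rightarrow> complex list" where
  "meas_map E p = map (\<lambda>(i,j). (p i - p j)^2) E"

inductive_set poly_fun :: "nat \<Rightarrow> (complex list \<Rightarrow> complex) set" for m :: nat where
  pf_const: "(\<lambda>x. c) \<in> poly_fun m"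
| pf_var: "k < m \<Longrightarrow> (\<lambda>x. x ! k) \<in> poly_fun m"
| pf_add: "f \<in> poly_fun m \<Longrightarrow> g \<in> poly_fun m \<Longrightarrow> (\<lambda>x. f x + g x) \<in> poly_fun m"
| pf_mult: "f \<in> poly_fun m \<Longrightarrow> g \<in> poly_fun m \<Longrightarrow> (\<lambda>x. f x * g x) \<in> poly_fun m"

definition zariski_closure :: "nat \<Rightarrow> complex list set \<Rightarrow> complex list set" where
  "zariski_closure m S = {x. length x = m \<and>
     (\<forall>f \<in> poly_fun m. (\<forall>y \<in> S. f y = 0) \<longrightarrow> f x = 0)}"

definition M1 :: "('a \<times> 'a) list \<Rightarrow> complex list set" where
  "M1 E = zariski_closure (length E) (range (meas_map E))"

definition adj :: "('a \<times> 'a) list \<Rightarrow> 'a \<Rightarrow> 'a \<Rightarrow> bool" where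
  "adj E u v \<longleftrightarrow> (\<exists>(i,j) \<in> set E. {i,j} = {u,v})"

definition connected_on :: "'a set \<Rightarrow> ('a \<times> 'a) list \<Rightarrow> bool" where
  "connected_on W E \<longleftrightarrow> W \<noteq> {} \<and>
     (\<forall>u \<in> W. \<forall>v \<in> W. (\<lambda>x y. x \<in> W \<and> y \<in> W \<and> adj E x y)\<^sup>*\<^sup>* u v)"

definition k_connected :: "nat \<Rightarrow> 'a set \<Rightarrow> ('a \<times> 'a) list \<Rightarrow> bool" where
  "k_connected k V E \<longleftrightarrow> card V > k \<and>
     (\<forall>X \<subseteq> V. card X < k \<longrightarrow> connected_on (V - X) E)"

definition no_isolated :: "'a set \<Rightarrow> ('a \<times> 'a) list \<Rightarrow> bool" where
  "no_isolated V E \<longleftrightarrow> (\<forall>v \<in> V. \<exists>(i,j) \<in> set E. v = i \<or> v = j)"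

end

theory Submission
  imports Defs "HOL-Library.FuncSet"
begin

lemma pf_subst:
  assumes "f \<in> poly_fun m" "\<And>k. k < m \<Longrightarrow> h k \<in> poly_fun m"
  shows "(\<lambda>x. f (map (\<lambda>k. h k x) [0..<m])) \<in> poly_fun m"
  using assms(1)
proof induction
  case (pf_const c) then show ?case by (rule poly_fun.pf_const)
next
  case (pf_var k) then show ?case using assms(2)[of k] by simp
next
  case (pf_add f g) show ?case using pf_add.IH by (rule poly_fun.pf_add)
next
  case (pf_mult f g) show ?case using pf_mult.IH by (rule poly_fun.pf_mult)
qed

lemma pf_sum: "finite A \<Longrightarrow> (\<And>a. a \<in> A \<Longrightarrow> F a \<in> poly_fun m) \<Longrightarrow> (\<lambda>x. \<Sum>a\<in>A. F a x) \<in> poly_fun m"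
proof (induction A rule: finite_induct)
  case empty then show ?case using poly_fun.pf_const[of 0] by simp
next
  case (insert a A) then show ?case by (simp add: poly_fun.pf_add)
qed

lemma pf_prod: "finite A \<Longrightarrow> (\<And>a. a \<in> A \<Longrightarrow> F a \<in> poly_fun m) \<Longrightarrow> (\<lambda>x. \<Prod>a\<in>A. F a x) \<in> poly_fun m"
proof (induction A rule: finite_induct)
  case empty then show ?case using poly_fun.pf_const[of 1] by simp
next
  case (insert a A) then show ?case by (simp add: poly_fun.pf_mult)
qed

lemma pf_decomp:
  assumes "g \<in> poly_fun m" "n < m"
  shows "\<exists>a\<in>poly_fun m. \<exists>b\<in>poly_fun m. \<forall>y. length y = m \<longrightarrow>
     g y = a (y[n := (y!n)^2]) + (y!n) * b (y[n := (y!n)^2])"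
  using assms(1)
proof induction
  case (pf_const c)
  show ?case
    by (rule bexI[of _ "\<lambda>x. c"], rule bexI[of _ "\<lambda>x. 0"]) (auto intro: poly_fun.pf_const)
next
  case (pf_var k)
  show ?case
  proof (cases "k = n")
    case True
    then show ?thesis
      by (intro bexI[of _ "\<lambda>x. 0"] bexI[of _ "\<lambda>x. 1"]) (auto intro: poly_fun.pf_const)
  next
    case False
    then show ?thesis using pf_var
      by (intro bexI[of _ "\<lambda>x. x ! k"] bexI[of _ "\<lambda>x. 0"]) (auto intro: poly_fun.intros)
  qed
next
  case (pf_add f g)
  then obtain a1 b1 a2 b2 where h: "a1 \<in> poly_fun m" "b1 \<in> poly_fun m" "a2 \<in> poly_fun m" "b2 \<in> poly_fun m"
    "\<forall>y. length y = m \<longrightarrow> f y = a1 (y[n := (y!n)^2]) + (y!n) * b1 (y[n := (y!n)^2])"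
    "\<forall>y. length y = m \<longrightarrow> g y = a2 (y[n := (y!n)^2]) + (y!n) * b2 (y[n := (y!n)^2])"
    by blast
  show ?case
    by (rule bexI[of _ "\<lambda>x. a1 x + a2 x"], rule bexI[of _ "\<lambda>x. b1 x + b2 x"])
       (use h in \<open>auto intro: poly_fun.intros simp: algebra_simps\<close>)
next
  case (pf_mult f g)
  then obtain a1 b1 a2 b2 where h: "a1 \<in> poly_fun m" "b1 \<in> poly_fun m" "a2 \<in> poly_fun m" "b2 \<in> poly_fun m"
    "\<forall>y. length y = m \<longrightarrow> f y = a1 (y[n := (y!n)^2]) + (y!n) * b1 (y[n := (y!n)^2])"
    "\<forall>y. length y = m \<longrightarrow> g y = a2 (y[n := (y!n)^2]) + (y!n) * b2 (y[n := (y!n)^2])"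
    by blast
  have v: "(\<lambda>x. x ! n) \<in> poly_fun m" using assms(2) by (rule poly_fun.pf_var)
  show ?case
  proof (rule bexI[of _ "\<lambda>x. a1 x * a2 x + x ! n * (b1 x * b2 x)"], rule bexI[of _ "\<lambda>x. a1 x * b2 x + a2 x * b1 x"])
    show "\<forall>y. length y = m \<longrightarrow> f y * g y = (\<lambda>x. a1 x * a2 x + x ! n * (b1 x * b2 x)) (y[n := (y ! n)\<^sup>2]) +
        y ! n * (\<lambda>x. a1 x * b2 x + a2 x * b1 x) (y[n := (y ! n)\<^sup>2])"
      using h(5,6) assms(2) by (auto simp: algebra_simps power2_eq_square)
  qed (use h v in \<open>auto intro!: poly_fun.intros\<close>)
qed

lemma pf_even:
  assumes "g \<in> poly_fun m" "n < m" "\<And>y. length y = m \<Longrightarrow> g (y[n := - (y!n)]) = g y"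
  shows "\<exists>a\<in>poly_fun m. \<forall>y. length y = m \<longrightarrow> g y = a (y[n := (y!n)^2])"
proof -
  obtain a b where ab: "a \<in> poly_fun m" "b \<in> poly_fun m" "\<forall>y. length y = m \<longrightarrow>
     g y = a (y[n := (y!n)^2]) + (y!n) * b (y[n := (y!n)^2])"
    using pf_decomp[OF assms(1,2)] by blast
  show ?thesis
  proof (intro bexI[OF _ ab(1)] allI impI)
    fix y :: "complex list" assume l: "length y = m"
    let ?y = "y[n := - (y!n)]"
    have e: "?y[n := (?y!n)^2] = y[n := (y!n)^2]" using l assms(2) by simp
    have "g ?y = a (y[n := (y!n)^2]) - (y!n) * b (y[n := (y!n)^2])"
      using ab(3)[rule_format, of ?y] l assms(2) e by simp
    moreover have "g y = a (y[n := (y!n)^2]) + (y!n) * b (y[n := (y!n)^2])" using ab(3) l by simp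
    ultimately show "g y = a (y[n := (y!n)^2])" using assms(3)[OF l] by (simp add: algebra_simps)
  qed
qed

definition sqS :: "nat set \<Rightarrow> complex list \<Rightarrow> complex list" where
  "sqS S y = map (\<lambda>k. if k \<in> S then (y!k)^2 else y!k) [0..<length y]"

definition rtS :: "nat set \<Rightarrow> complex list \<Rightarrow> complex list" where
  "rtS S y = map (\<lambda>k. if k \<in> S then csqrt (y!k) else y!k) [0..<length y]"

lemma sqS_rtS: "sqS S (rtS S z) = z"
  by (rule nth_equalityI) (auto simp: sqS_def rtS_def)

lemma pf_even_set:
  assumes "finite S" "S \<subseteq> {..<m}" "g \<in> poly_fun m"
    "\<And>n y. n \<in> S \<Longrightarrow> length y = m \<Longrightarrow> g (y[n := - (y!n)]) = g y"
  shows "\<exists>f\<in>poly_fun m. \<forall>y. length y = m \<longrightarrow> g y = f (sqS S y)"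
  using assms
proof (induction S rule: finite_induct)
  case empty
  have "sqS {} y = y" for y by (rule nth_equalityI) (auto simp: sqS_def)
  then show ?case using empty.prems(2) by (intro bexI[of _ g]) auto
next
  case (insert n S)
  have nm: "n < m" using insert.prems(1) by auto
  have "\<exists>f\<in>poly_fun m. \<forall>y. length y = m \<longrightarrow> g y = f (sqS S y)"
    apply (rule insert.IH)
    using insert.prems by blast+
  then obtain f where f: "f \<in> poly_fun m" "\<forall>y. length y = m \<longrightarrow> g y = f (sqS S y)" by blast
  have fz: "f z = g (rtS S z)" if "length z = m" for z
  proof -
    have "length (rtS S z) = m" using that by (simp add: rtS_def)
    then have "g (rtS S z) = f (sqS S (rtS S z))" using f(2) by blast
    then show ?thesis by (simp add: sqS_rtS)
  qed
  have fev: "f (z[n := - (z!n)]) = f z" if l: "length z = m" for z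
  proof -
    have e: "rtS S (z[n := - (z!n)]) = (rtS S z)[n := - ((rtS S z) ! n)]"
      using insert.hyps(2) l nm
      apply (intro nth_equalityI)
       apply (simp add: rtS_def)
      subgoal for i by (cases "i = n") (simp_all add: rtS_def)
      done
    have lr: "length (rtS S z) = m" using l by (simp add: rtS_def)
    have "f (z[n := - (z!n)]) = g (rtS S (z[n := - (z!n)]))" using fz[of "z[n := - (z!n)]"] l by simp
    also have "\<dots> = g ((rtS S z)[n := - ((rtS S z) ! n)])" using e by simp
    also have "\<dots> = g (rtS S z)" using insert.prems(3)[of n "rtS S z"] lr by simp
    also have "\<dots> = f z" using fz[OF l] by simp
    finally show ?thesis .
  qed
  have "\<exists>a\<in>poly_fun m. \<forall>z. length z = m \<longrightarrow> f z = a (z[n := (z!n)^2])"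
    by (rule pf_even[where g=f and n=n and m=m]) (fact f(1), fact nm, erule fev)
  then obtain a where a: "a \<in> poly_fun m" "\<forall>z. length z = m \<longrightarrow> f z = a (z[n := (z!n)^2])"
    by blast
  show ?case
  proof (intro bexI[OF _ a(1)] allI impI)
    fix y :: "complex list" assume l: "length y = m"
    have e: "(sqS S y)[n := ((sqS S y)!n)^2] = sqS (insert n S) y"
      using insert.hyps(2) l nm
      apply (intro nth_equalityI)
       apply (simp add: sqS_def)
      subgoal for i by (cases "i = n") (simp_all add: sqS_def)
      done
    have ls: "length (sqS S y) = m" using l by (simp add: sqS_def)
    have "g y = f (sqS S y)" using f(2) l by blast
    also have "\<dots> = a ((sqS S y)[n := ((sqS S y)!n)^2])" using a(2) ls by blast
    finally show "g y = a (sqS (insert n S) y)" using e by simp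
  qed
qed

definition dif :: "('a \<times> 'a) list \<Rightarrow> ('a \<Rightarrow> complex) \<Rightarrow> nat \<Rightarrow> complex" where
  "dif E p i = p (fst (E!i)) - p (snd (E!i))"

definition dep :: "('a \<times> 'a) list \<Rightarrow> nat set \<Rightarrow> bool" where
  "dep E S \<longleftrightarrow> (\<exists>f\<in>poly_fun (length E). (\<forall>p. f (meas_map E p) = 0) \<and>
     (\<exists>x. length x = length E \<and> f x \<noteq> 0) \<and>
     (\<forall>x x'. length x = length E \<longrightarrow> length x' = length E \<longrightarrow> (\<forall>k\<in>S. x!k = x'!k) \<longrightarrow> f x = f x'))"

definition signs :: "nat set \<Rightarrow> (nat \<Rightarrow> complex) set" where
  "signs S = {\<epsilon>. (\<forall>i\<in>S. \<epsilon> i = 1 \<or> \<epsilon> i = -1) \<and> (\<forall>i. i \<notin> S \<longrightarrow> \<epsilon> i = 1)}"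

lemma finite_signs: assumes "finite S" shows "finite (signs S)"
proof -
  have "signs S \<subseteq> (\<lambda>f i. if i \<in> S then f i else 1) ` (PiE S (\<lambda>_. {1,-1}))"
  proof
    fix \<epsilon> assume e: "\<epsilon> \<in> signs S"
    have "\<epsilon> = (\<lambda>i. if i \<in> S then restrict \<epsilon> S i else 1)" using e by (auto simp: signs_def)
    moreover have "restrict \<epsilon> S \<in> PiE S (\<lambda>_. {1,-1})" using e by (auto simp: signs_def)
    ultimately show "\<epsilon> \<in> (\<lambda>f i. if i \<in> S then f i else 1) ` (PiE S (\<lambda>_. {1,-1}))" by blast
  qed
  moreover have "finite (PiE S (\<lambda>_. {1::complex,-1}))" using assms by (intro finite_PiE) auto
  ultimately show ?thesis using finite_subset by blast
qed

lemma meas_nth: "k < length E \<Longrightarrow> meas_map E p ! k = (dif E p k)^2"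
  by (simp add: meas_map_def dif_def split_beta)

lemma length_meas[simp]: "length (meas_map E p) = length E"
  by (simp add: meas_map_def)

lemma cyc_poly:
  assumes "finite S" "S \<subseteq> {..<length E}" "k \<in> S" "c k \<noteq> 0"
    "\<And>p. (\<Sum>i\<in>S. c i * dif E p i) = 0"
  shows "dep E S"
proof -
  define m where "m = length E"
  define N where "N = (\<lambda>y. \<Prod>\<epsilon>\<in>signs S. \<Sum>i\<in>S. c i * \<epsilon> i * (y ! i :: complex))"
  have fs: "finite (signs S)" using finite_signs[OF assms(1)] .
  have Sm: "\<And>i. i \<in> S \<Longrightarrow> i < m" using assms(2) m_def by auto
  have Npf: "N \<in> poly_fun m" unfolding N_def
    apply (rule pf_prod[OF fs])
    apply (rule pf_sum[OF assms(1)])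
    apply (rule poly_fun.pf_mult[OF poly_fun.pf_const poly_fun.pf_var])
    using Sm by blast
  have Nev: "N (y[n := - (y!n)]) = N y" if n: "n \<in> S" and l: "length y = m" for n y
  proof -
    define fl where "fl = (\<lambda>\<epsilon>::nat\<Rightarrow>complex. \<epsilon>(n := - \<epsilon> n))"
    have fl_s: "fl \<epsilon> \<in> signs S" if "\<epsilon> \<in> signs S" for \<epsilon>
      using that n by (auto simp: signs_def fl_def)
    have fl_fl: "fl (fl \<epsilon>) = \<epsilon>" for \<epsilon> by (auto simp: fl_def)
    have "N (y[n := - (y!n)]) = (\<Prod>\<epsilon>\<in>signs S. \<Sum>i\<in>S. c i * fl \<epsilon> i * (y ! i))"
      unfolding N_def
    proof (rule prod.cong[OF refl], rule sum.cong[OF refl])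
      fix \<epsilon> i assume "i \<in> S"
      then have "i < length y" using Sm l by auto
      then show "c i * \<epsilon> i * y[n := - y ! n] ! i = c i * fl \<epsilon> i * y ! i"
        by (cases "i = n") (auto simp: fl_def)
    qed
    also have "\<dots> = N y" unfolding N_def
      by (rule prod.reindex_bij_witness[where i=fl and j=fl]) (auto simp: fl_fl fl_s)
    finally show ?thesis .
  qed
  obtain f0 where f0: "f0 \<in> poly_fun m" "\<forall>y. length y = m \<longrightarrow> N y = f0 (sqS S y)"
  proof -
    have "\<exists>f\<in>poly_fun m. \<forall>y. length y = m \<longrightarrow> N y = f (sqS S y)"
      by (rule pf_even_set[where g=N]) (use assms(1,2) Npf Nev in \<open>auto simp: m_def\<close>)
    then show ?thesis using that by blast
  qed
  define pr where "pr = (\<lambda>x::complex list. map (\<lambda>k. if k \<in> S then x!k else 0) [0..<m])"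
  define F where "F = (\<lambda>x. f0 (pr x))"
  have Fpf: "F \<in> poly_fun m" unfolding F_def pr_def
    apply (rule pf_subst[OF f0(1), of "\<lambda>k x. if k \<in> S then x!k else 0", simplified])
    subgoal for k by (cases "k \<in> S") (auto intro: poly_fun.intros)
    done
  have "(\<forall>p. F (meas_map E p) = 0)"
  proof
    fix p
    define y where "y = map (\<lambda>k. if k \<in> S then dif E p k else 0) [0..<m]"
    have "sqS S y = pr (meas_map E p)"
      by (rule nth_equalityI) (auto simp: sqS_def pr_def y_def m_def meas_nth)
    then have "F (meas_map E p) = N y" using f0(2) by (simp add: F_def y_def)
    also have "\<dots> = 0" unfolding N_def
    proof (rule prod_zero[OF fs], rule bexI[of _ "\<lambda>_. 1"])
      have "(\<Sum>i\<in>S. c i * 1 * y ! i) = (\<Sum>i\<in>S. c i * dif E p i)"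
        by (rule sum.cong) (auto simp: y_def Sm)
      then show "(\<Sum>i\<in>S. c i * 1 * y ! i) = 0" using assms(5) by simp
    qed (auto simp: signs_def)
    finally show "F (meas_map E p) = 0" .
  qed
  moreover have "\<exists>x. length x = m \<and> F x \<noteq> 0"
  proof (intro exI conjI)
    define x where "x = map (\<lambda>i. if i = k then 1 else (0::complex)) [0..<m]"
    show "length x = m" by (simp add: x_def)
    have px: "pr x = x" by (rule nth_equalityI) (auto simp: pr_def x_def assms(3))
    have sx: "sqS S x = x" by (rule nth_equalityI) (auto simp: sqS_def x_def)
    have "F x = N x" using f0(2) px sx by (simp add: F_def x_def)
    also have "\<dots> = (\<Prod>\<epsilon>\<in>signs S. c k * \<epsilon> k)" unfolding N_def
    proof (rule prod.cong[OF refl])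
      fix \<epsilon>
      have "(\<Sum>i\<in>S. c i * \<epsilon> i * x ! i) = (\<Sum>i\<in>S. if i = k then c k * \<epsilon> k else 0)"
        by (rule sum.cong) (auto simp: x_def Sm)
      also have "\<dots> = c k * \<epsilon> k" using assms(1,3) by simp
      finally show "(\<Sum>i\<in>S. c i * \<epsilon> i * x ! i) = c k * \<epsilon> k" .
    qed
    also have "\<dots> \<noteq> 0"
    proof -
      have "c k * \<epsilon> k \<noteq> 0" if "\<epsilon> \<in> signs S" for \<epsilon>
      proof -
        have "\<epsilon> k = 1 \<or> \<epsilon> k = -1" using that assms(3) by (auto simp: signs_def)
        then show ?thesis using assms(4) by auto
      qed
      then have "\<not>(\<exists>\<epsilon>\<in>signs S. c k * \<epsilon> k = 0)" by blast
      then show ?thesis using prod_zero_iff[OF fs, of "\<lambda>\<epsilon>. c k * \<epsilon> k"] by simp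
    qed
    finally show "F x \<noteq> 0" .
  qed
  moreover have "\<forall>x x'. length x = m \<longrightarrow> length x' = m \<longrightarrow> (\<forall>k\<in>S. x!k = x'!k) \<longrightarrow> F x = F x'"
  proof (intro allI impI)
    fix x x' :: "complex list" assume "\<forall>k\<in>S. x!k = x'!k"
    then have "pr x = pr x'" by (auto simp: pr_def)
    then show "F x = F x'" by (simp add: F_def)
  qed
  ultimately have "\<exists>f\<in>poly_fun m. (\<forall>p. f (meas_map E p) = 0) \<and>
     (\<exists>x. length x = m \<and> f x \<noteq> 0) \<and>
     (\<forall>x x'. length x = m \<longrightarrow> length x' = m \<longrightarrow> (\<forall>k\<in>S. x!k = x'!k) \<longrightarrow> f x = f x')"
    using Fpf by blast
  then show ?thesis unfolding dep_def m_def .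
qed

definition stp :: "('a \<times> 'a) list \<Rightarrow> nat set \<Rightarrow> 'a \<Rightarrow> 'a \<Rightarrow> bool" where
  "stp E T x y \<longleftrightarrow> (\<exists>i\<in>T. {x,y} = {fst (E!i), snd (E!i)})"

abbreviation conn :: "('a \<times> 'a) list \<Rightarrow> nat set \<Rightarrow> 'a \<Rightarrow> 'a \<Rightarrow> bool" where
  "conn E T \<equiv> (stp E T)\<^sup>*\<^sup>*"

definition cyc :: "('a \<times> 'a) list \<Rightarrow> nat set \<Rightarrow> bool" where
  "cyc E S \<longleftrightarrow> (\<exists>k\<in>S. conn E (S - {k}) (fst (E!k)) (snd (E!k)))"

lemma stp_sym: "stp E T x y \<Longrightarrow> stp E T y x"
  unfolding stp_def by (auto simp: insert_commute)

lemma conn_sym: "conn E T x y \<Longrightarrow> conn E T y x"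
proof (induction rule: rtranclp_induct)
  case base then show ?case by simp
next
  case (step y z)
  then show ?case using stp_sym converse_rtranclp_into_rtranclp by metis
qed

lemma conn_mono: "conn E T x y \<Longrightarrow> T \<subseteq> T' \<Longrightarrow> conn E T' x y"
proof (induction rule: rtranclp_induct)
  case base then show ?case by simp
next
  case (step y z)
  then have "stp E T' y z" unfolding stp_def by blast
  then show ?case using step by (meson rtranclp.rtrancl_into_rtrancl)
qed

lemma conn_edge: "i \<in> T \<Longrightarrow> conn E T (fst (E!i)) (snd (E!i))"
  unfolding stp_def by (rule r_into_rtranclp) blast

lemma conn_lin:
  assumes "conn E T u w" "finite T"
  shows "\<exists>c. \<forall>p. p u - p w = (\<Sum>i\<in>T. c i * dif E p i)"
  using assms(1)
proof (induction rule: rtranclp_induct)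
  case base
  show ?case by (rule exI[of _ "\<lambda>_. 0"]) simp
next
  case (step x y)
  then obtain c where c: "\<forall>p. p u - p x = (\<Sum>i\<in>T. c i * dif E p i)" by blast
  from step(2) obtain i where i: "i \<in> T" "{x,y} = {fst (E!i), snd (E!i)}" unfolding stp_def by blast
  obtain s where s: "\<forall>p. p x - p y = s * dif E p i"
  proof (cases "x = fst (E!i) \<and> y = snd (E!i)")
    case True then show ?thesis using that[of 1] by (simp add: dif_def)
  next
    case False
    then have "x = snd (E!i) \<and> y = fst (E!i)" using i(2) by (auto simp: doubleton_eq_iff)
    then show ?thesis using that[of "-1"] by (simp add: dif_def)
  qed
  show ?case
  proof (rule exI[of _ "\<lambda>j. c j + (if j = i then s else 0)"], rule allI)
    fix p
    have "(\<Sum>j\<in>T. (c j + (if j = i then s else 0)) * dif E p j)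
        = (\<Sum>j\<in>T. c j * dif E p j) + (\<Sum>j\<in>T. (if j = i then s * dif E p j else 0))"
      by (subst sum.distrib[symmetric], rule sum.cong) (auto simp: algebra_simps)
    also have "\<dots> = (p u - p x) + s * dif E p i" using c i(1) assms(2) by simp
    also have "\<dots> = p u - p y" using s by (metis diff_add_cancel add_diff_eq)
    finally show "p u - p y = (\<Sum>j\<in>T. (c j + (if j = i then s else 0)) * dif E p j)" by simp
  qed
qed

lemma cyc_dep:
  assumes "finite S" "S \<subseteq> {..<length E}" "cyc E S"
  shows "dep E S"
proof -
  obtain k where k: "k \<in> S" "conn E (S - {k}) (fst (E!k)) (snd (E!k))"
    using assms(3) unfolding cyc_def by blast
  obtain c where c: "\<forall>p. p (fst (E!k)) - p (snd (E!k)) = (\<Sum>i\<in>S-{k}. c i * dif E p i)"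
    using conn_lin[OF k(2)] assms(1) by blast
  show ?thesis
  proof (rule cyc_poly[OF assms(1,2) k(1), of "c(k := -1)"])
    show "(c(k := -1)) k \<noteq> 0" by simp
    fix p
    have "(\<Sum>i\<in>S. (c(k := -1)) i * dif E p i) = (c(k := -1)) k * dif E p k + (\<Sum>i\<in>S-{k}. (c(k := -1)) i * dif E p i)"
      using assms(1) k(1) by (simp add: sum.remove)
    also have "(\<Sum>i\<in>S-{k}. (c(k := -1)) i * dif E p i) = (\<Sum>i\<in>S-{k}. c i * dif E p i)"
      by (rule sum.cong) auto
    finally show "(\<Sum>i\<in>S. (c(k := -1)) i * dif E p i) = 0" using c by (simp add: dif_def)
  qed
qed

lemma cyc_mono: "cyc E S \<Longrightarrow> S \<subseteq> S' \<Longrightarrow> cyc E S'"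
  unfolding cyc_def by (meson Diff_mono conn_mono order_refl subsetD)

lemma nocyc_surj:
  assumes "finite S" "\<not> cyc E S"
  shows "\<exists>p. \<forall>k\<in>S. (dif E p k)^2 = x!k"
  using assms
proof (induction S rule: finite_induct)
  case empty then show ?case by simp
next
  case (insert k S)
  have nc: "\<not> cyc E S" using insert.prems cyc_mono by blast
  obtain p' where p': "\<forall>j\<in>S. (dif E p' j)^2 = x!j" using insert.IH nc by blast
  have nk: "\<not> conn E S (fst (E!k)) (snd (E!k))"
    using insert.prems insert.hyps(2) unfolding cyc_def by auto
  define a where "a = fst (E!k)"
  define \<delta> where "\<delta> = csqrt (x!k) - dif E p' k"
  define p where "p = (\<lambda>z. p' z + (if conn E S a z then \<delta> else 0))"
  have "\<forall>j\<in>insert k S. (dif E p j)^2 = x!j"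
  proof
    fix j assume j: "j \<in> insert k S"
    show "(dif E p j)^2 = x!j"
    proof (cases "j = k")
      case True
      have "conn E S a a" by simp
      then have "dif E p k = dif E p' k + \<delta>" using nk by (simp add: dif_def p_def a_def)
      then show ?thesis using True by (simp add: \<delta>_def)
    next
      case False
      then have jS: "j \<in> S" using j by simp
      have "conn E S a (fst (E!j)) \<longleftrightarrow> conn E S a (snd (E!j))"
        using conn_edge[OF jS, of E] conn_sym[OF conn_edge[OF jS, of E]]
        by (meson rtranclp_trans)
      then have "dif E p j = dif E p' j" by (simp add: dif_def p_def)
      then show ?thesis using p' jS by simp
    qed
  qed
  then show ?case by blast
qed

lemma dep_cyc:
  assumes "finite S" "dep E S" "S \<subseteq> {..<length E}"
  shows "cyc E S"
proof (rule ccontr)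
  assume nc: "\<not> cyc E S"
  obtain f where f: "f \<in> poly_fun (length E)" "\<forall>p. f (meas_map E p) = 0"
    "\<exists>x. length x = length E \<and> f x \<noteq> 0"
    "\<forall>x x'. length x = length E \<longrightarrow> length x' = length E \<longrightarrow> (\<forall>k\<in>S. x!k = x'!k) \<longrightarrow> f x = f x'"
    using assms(2) unfolding dep_def by blast
  obtain x where x: "length x = length E" "f x \<noteq> 0" using f(3) by blast
  obtain p where p: "\<forall>k\<in>S. (dif E p k)^2 = x!k" using nocyc_surj[OF assms(1) nc] by blast
  have "\<forall>k\<in>S. x ! k = meas_map E p ! k"
  proof
    fix k assume k: "k \<in> S"
    then have "k < length E" using assms(3) by auto
    then show "x ! k = meas_map E p ! k" using p k by (simp add: meas_nth)
  qed
  then have "f x = f (meas_map E p)" using f(4) x(1) length_meas by blast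
  then show False using x(2) f(2) by simp
qed

lemma meas_in_M1: "meas_map E q \<in> M1 E"
  unfolding M1_def zariski_closure_def by auto

lemma dep_transfer:
  assumes "length EG = length EH" "M1 EG = M1 EH" "dep EG S"
  shows "dep EH S"
proof -
  obtain f where f: "f \<in> poly_fun (length EG)" "\<forall>p. f (meas_map EG p) = 0"
    "\<exists>x. length x = length EG \<and> f x \<noteq> 0"
    "\<forall>x x'. length x = length EG \<longrightarrow> length x' = length EG \<longrightarrow> (\<forall>k\<in>S. x!k = x'!k) \<longrightarrow> f x = f x'"
    using assms(3) unfolding dep_def by blast
  have "f (meas_map EH q) = 0" for q
  proof -
    have "meas_map EH q \<in> M1 EG" using meas_in_M1 assms(2) by metis
    then show ?thesis using f(1,2) unfolding M1_def zariski_closure_def by blast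
  qed
  then show ?thesis unfolding dep_def using f assms(1) by metis
qed

lemma cyc_transfer:
  assumes "length EG = length EH" "M1 EG = M1 EH" "finite S" "S \<subseteq> {..<length EG}" "cyc EG S"
  shows "cyc EH S"
proof -
  have "dep EG S" using cyc_dep assms(3,4,5) by blast
  then have "dep EH S" using dep_transfer assms(1,2) by blast
  then show ?thesis using dep_cyc assms(1,3,4) by metis
qed

lemma conn_remove:
  assumes "conn E T u w" "conn E (T - {k}) (fst (E!k)) (snd (E!k))"
  shows "conn E (T - {k}) u w"
  using assms(1)
proof (induction rule: rtranclp_induct)
  case base then show ?case by simp
next
  case (step y z)
  from step(2) obtain i where i: "i \<in> T" "{y,z} = {fst (E!i), snd (E!i)}" unfolding stp_def by blast
  show ?case
  proof (cases "i = k")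
    case False
    then have "stp E (T - {k}) y z" using i unfolding stp_def by blast
    then show ?thesis using step(3) by (meson rtranclp.rtrancl_into_rtrancl)
  next
    case True
    have "conn E (T - {k}) y z"
    proof (cases "y = fst (E!k) \<and> z = snd (E!k)")
      case True then show ?thesis using assms(2) by simp
    next
      case False
      then have "y = snd (E!k) \<and> z = fst (E!k)" using i(2) \<open>i = k\<close> by (auto simp: doubleton_eq_iff)
      then show ?thesis using conn_sym[OF assms(2)] by simp
    qed
    then show ?thesis using step(3) by (meson rtranclp_trans)
  qed
qed

lemma min_acyc:
  assumes "finite T" "conn E T u w"
  shows "\<exists>T'\<subseteq>T. conn E T' u w \<and> \<not> cyc E T'"
  using assms
proof (induction "card T" arbitrary: T rule: less_induct)
  case less
  show ?case
  proof (cases "cyc E T")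
    case False then show ?thesis using less.prems by blast
  next
    case True
    then obtain k where k: "k \<in> T" "conn E (T - {k}) (fst (E!k)) (snd (E!k))" unfolding cyc_def by blast
    have c: "conn E (T - {k}) u w" using conn_remove[OF less.prems(2) k(2)] .
    have "card (T - {k}) < card T" using card_Diff1_less[OF less.prems(1) k(1)] .
    then obtain T' where "T' \<subseteq> T - {k}" "conn E T' u w" "\<not> cyc E T'"
      using less.hyps[of "T - {k}"] less.prems(1) c by blast
    then show ?thesis by blast
  qed
qed

lemma conn_insert:
  assumes "conn E (insert j R) u w"
  shows "conn E R u w \<or> conn E R u (fst (E!j)) \<or> conn E R u (snd (E!j))"
  using assms
proof (induction rule: rtranclp_induct)
  case base then show ?case by simp
next
  case (step y z)
  from step(2) obtain i where i: "i \<in> insert j R" "{y,z} = {fst (E!i), snd (E!i)}" unfolding stp_def by blast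
  show ?case
  proof (cases "i = j")
    case True
    then have "y = fst (E!j) \<or> y = snd (E!j)" using i(2) by (auto simp: doubleton_eq_iff)
    then show ?thesis using step(3) by blast
  next
    case False
    then have "stp E R y z" using i unfolding stp_def by blast
    then show ?thesis using step(3) by (meson rtranclp.rtrancl_into_rtrancl)
  qed
qed

lemma span_char:
  assumes "finite T" "e \<notin> T"
  shows "conn E T (fst (E!e)) (snd (E!e)) \<longleftrightarrow> (\<exists>T'\<subseteq>T. cyc E (insert e T') \<and> \<not> cyc E T')"
proof
  assume h: "conn E T (fst (E!e)) (snd (E!e))"
  have "\<exists>T'\<subseteq>T. conn E T' (fst (E!e)) (snd (E!e)) \<and> \<not> cyc E T'"
    by (rule min_acyc[where E=E]) (rule assms(1), rule h)
  then obtain T' where T': "T' \<subseteq> T" "conn E T' (fst (E!e)) (snd (E!e))" "\<not> cyc E T'"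
    by blast
  have "e \<notin> T'" using T'(1) assms(2) by blast
  then have "insert e T' - {e} = T'" by blast
  then have "cyc E (insert e T')" unfolding cyc_def using T'(2) by (intro bexI[of _ e]) simp_all
  then show "\<exists>T'\<subseteq>T. cyc E (insert e T') \<and> \<not> cyc E T'" using T' by blast
next
  assume "\<exists>T'\<subseteq>T. cyc E (insert e T') \<and> \<not> cyc E T'"
  then obtain T' where T': "T' \<subseteq> T" "cyc E (insert e T')" "\<not> cyc E T'" by blast
  have eT': "e \<notin> T'" using T'(1) assms(2) by blast
  obtain j where j: "j \<in> insert e T'" "conn E (insert e T' - {j}) (fst (E!j)) (snd (E!j))"
    using T'(2) unfolding cyc_def by blast
  have "conn E T' (fst (E!e)) (snd (E!e))"
  proof (cases "j = e")
    case True
    then have "insert e T' - {j} = T'" using eT' by blast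
    then show ?thesis using j(2) True by simp
  next
    case False
    then have jT: "j \<in> T'" using j(1) by blast
    have eq: "insert e T' - {j} = insert e (T' - {j})" using False by blast
    have nj: "\<not> conn E (T' - {j}) (fst (E!j)) (snd (E!j))" using T'(3) jT unfolding cyc_def by blast
    let ?R = "T' - {j}" let ?a = "fst (E!e)" let ?b = "snd (E!e)"
    let ?x = "fst (E!j)" let ?y = "snd (E!j)"
    have jc: "conn E (insert e ?R) ?x ?y" using j(2) eq by simp
    have c1: "conn E ?R ?x ?a \<or> conn E ?R ?x ?b"
      using conn_insert[OF jc] nj by blast
    have nj': "\<not> conn E ?R ?y ?x" using nj conn_sym[of E ?R ?y ?x] by blast
    have c2: "conn E ?R ?y ?a \<or> conn E ?R ?y ?b"
      using conn_insert[OF conn_sym[OF jc]] nj' by blast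
    have jj: "conn E T' ?x ?y" using conn_edge[OF jT] .
    have mono: "conn E ?R s t \<Longrightarrow> conn E T' s t" for s t using conn_mono[of E ?R s t T'] by blast
    have tr: "conn E ?R s t \<Longrightarrow> conn E ?R t w \<Longrightarrow> conn E ?R s w" for s t w
      by (rule rtranclp_trans)
    show ?thesis
    proof -
      { assume h: "conn E ?R ?x ?a" "conn E ?R ?y ?a"
        have "conn E ?R ?x ?y" using tr[OF h(1) conn_sym[OF h(2)]] .
        then have False using nj by blast }
      moreover
      { assume h: "conn E ?R ?x ?b" "conn E ?R ?y ?b"
        have "conn E ?R ?x ?y" using tr[OF h(1) conn_sym[OF h(2)]] .
        then have False using nj by blast }
      moreover
      { assume h: "conn E ?R ?x ?a" "conn E ?R ?y ?b"
        have "conn E T' ?a ?x" using mono[OF conn_sym[OF h(1)]] .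
        then have "conn E T' ?a ?y" using jj by (rule rtranclp_trans)
        then have "conn E T' ?a ?b" using mono[OF h(2)] by (rule rtranclp_trans) }
      moreover
      { assume h: "conn E ?R ?x ?b" "conn E ?R ?y ?a"
        have "conn E T' ?b ?x" using mono[OF conn_sym[OF h(1)]] .
        then have "conn E T' ?b ?y" using jj by (rule rtranclp_trans)
        then have "conn E T' ?b ?a" using mono[OF h(2)] by (rule rtranclp_trans)
        then have "conn E T' ?a ?b" by (rule conn_sym) }
      ultimately show ?thesis using c1 c2 by blast
    qed
  qed
  then show "conn E T (fst (E!e)) (snd (E!e))" using T'(1) by (rule conn_mono)
qed

lemma span_transfer:
  assumes "length EG = length EH" "M1 EG = M1 EH" "finite T" "T \<subseteq> {..<length EG}" "e < length EG" "e \<notin> T"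
    "conn EG T (fst (EG!e)) (snd (EG!e))"
  shows "conn EH T (fst (EH!e)) (snd (EH!e))"
proof -
  obtain T' where T': "T' \<subseteq> T" "cyc EG (insert e T')" "\<not> cyc EG T'"
    using span_char[OF assms(3,6)] assms(7) by blast
  have f: "finite T'" using T'(1) assms(3) finite_subset by blast
  have "cyc EH (insert e T')" using cyc_transfer[OF assms(1,2)] T'(1) assms(4,5) f T'(2) by auto
  moreover have "\<not> cyc EH T'"
    using cyc_transfer[OF assms(1,2)[symmetric], of T'] T'(1,3) assms(1,4) f by auto
  ultimately show ?thesis using span_char[OF assms(3,6)] T'(1) by blast
qed

definition edges_in :: "('a \<times> 'a) list \<Rightarrow> 'a set \<Rightarrow> nat set" where
  "edges_in E W = {k. k < length E \<and> fst (E!k) \<in> W \<and> snd (E!k) \<in> W}"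

definition star :: "('a \<times> 'a) list \<Rightarrow> 'a \<Rightarrow> nat set" where
  "star E v = {k. k < length E \<and> (fst (E!k) = v \<or> snd (E!k) = v)}"

lemma og_edge:
  assumes "ordered_graph V E" "k < length E"
  shows "fst (E!k) \<in> V" "snd (E!k) \<in> V" "fst (E!k) \<noteq> snd (E!k)"
proof -
  have m: "E!k \<in> set E" using assms(2) by (rule nth_mem)
  have "\<forall>x\<in>set E. (case x of (i,j) \<Rightarrow> i \<in> V \<and> j \<in> V \<and> i \<noteq> j)"
    using assms(1) unfolding ordered_graph_def by (elim conjE) assumption
  then have "case E!k of (i,j) \<Rightarrow> i \<in> V \<and> j \<in> V \<and> i \<noteq> j" using m by (rule bspec)
  then show "fst (E!k) \<in> V" "snd (E!k) \<in> V" "fst (E!k) \<noteq> snd (E!k)" by (cases "E!k", simp)+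
qed

lemma conn_on:
  assumes "connected_on W E" "u \<in> W" "w \<in> W"
  shows "conn E (edges_in E W) u w"
proof -
  have r: "(\<lambda>x y. x \<in> W \<and> y \<in> W \<and> adj E x y)\<^sup>*\<^sup>* u w" using assms unfolding connected_on_def by blast
  show ?thesis using r
  proof (induction rule: rtranclp_induct)
    case base then show ?case by simp
  next
    case (step y z)
    then have yz: "y \<in> W" "z \<in> W" "adj E y z" by auto
    then obtain i j where ij: "(i,j) \<in> set E" "{i,j} = {y,z}" unfolding adj_def by blast
    then obtain k where k: "k < length E" "E!k = (i,j)" by (metis in_set_conv_nth)
    have "{i,j} \<subseteq> W" using ij(2) yz(1,2) by auto
    then have "k \<in> edges_in E W" using k unfolding edges_in_def by simp
    then have "stp E (edges_in E W) y z" unfolding stp_def using k(2) ij(2) by (intro bexI[of _ k]) auto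
    then show ?case by (rule rtranclp.rtrancl_into_rtrancl[OF step.IH])
  qed
qed

lemma conn_iso:
  assumes "conn E R v x" "\<forall>i\<in>R. fst (E!i) \<noteq> v \<and> snd (E!i) \<noteq> v"
  shows "x = v"
  using assms(1)
proof (induction rule: rtranclp_induct)
  case base then show ?case by simp
next
  case (step y z)
  from step(2) obtain i where i: "i \<in> R" "{y,z} = {fst (E!i), snd (E!i)}" unfolding stp_def by blast
  then show ?case using step.IH assms(2) by (auto simp: doubleton_eq_iff)
qed

lemma three_elems:
  assumes "finite V" "card V > 2"
  shows "\<exists>c\<in>V. c \<noteq> u \<and> c \<noteq> v"
proof (rule ccontr)
  assume "\<not> ?thesis"
  then have "V \<subseteq> {u,v}" by blast
  then have "card V \<le> card {u,v}" by (rule card_mono[rotated]) simp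
  also have "\<dots> \<le> 2" by (simp add: card_insert_if)
  finally show False using assms(2) by simp
qed

lemma conn_first_step:
  assumes "conn E T u w" "u \<noteq> w"
  shows "\<exists>i\<in>T. \<exists>y. {u,y} = {fst (E!i), snd (E!i)}"
proof -
  obtain y where "stp E T u y" using assms by (metis converse_rtranclpE)
  then show ?thesis unfolding stp_def by blast
qed

locale G3 =
  fixes V :: "'a set" and E :: "('a \<times> 'a) list"
  assumes og: "ordered_graph V E" and kc: "k_connected 3 V E"
begin

lemma finV: "finite V" using og unfolding ordered_graph_def by simp
lemma cardV: "card V > 3" using kc unfolding k_connected_def by simp

lemma conn_minus:
  assumes "X \<subseteq> V" "card X < 3" "u \<in> V - X" "w \<in> V - X"
  shows "conn E (edges_in E (V - X)) u w"
proof -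
  have "connected_on (V - X) E" using kc assms(1,2) unfolding k_connected_def by blast
  then show ?thesis using assms(3,4) by (rule conn_on)
qed

lemma edges_in_minus_v: "edges_in E (V - {v}) = {k. k < length E} - star E v"
  using og_edge[OF og] unfolding edges_in_def star_def by auto

lemma star_ne:
  assumes "v \<in> V" shows "star E v \<noteq> {}"
proof -
  obtain u where u: "u \<in> V" "u \<noteq> v" using three_elems[OF finV, of v v] cardV by auto
  have "conn E (edges_in E (V - {})) v u" using conn_minus[of "{}" v u] assms u by simp
  from conn_first_step[OF this u(2)[symmetric]]
  obtain i y where i: "i \<in> edges_in E (V - {})" "{v,y} = {fst (E!i), snd (E!i)}" by blast
  then have "i \<in> star E v" unfolding star_def edges_in_def by (auto simp: doubleton_eq_iff)
  then show ?thesis by blast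
qed

lemma star_inj:
  assumes "u \<in> V" "v \<in> V" "u \<noteq> v"
  shows "star E u \<noteq> star E v"
proof
  assume eq: "star E u = star E v"
  obtain c where c: "c \<in> V" "c \<noteq> u" "c \<noteq> v" using three_elems[OF finV, of u v] cardV by auto
  have "conn E (edges_in E (V - {v})) u c" using conn_minus[of "{v}" u c] assms c by simp
  from conn_first_step[OF this c(2)[symmetric]]
  obtain i y where i: "i \<in> edges_in E (V - {v})" "{u,y} = {fst (E!i), snd (E!i)}" by blast
  then have "i \<in> star E u" unfolding star_def edges_in_def by (auto simp: doubleton_eq_iff)
  then have "i \<in> star E v" using eq by simp
  then show False using i(1) unfolding star_def edges_in_def by auto
qed


definition oth :: "'a \<Rightarrow> nat \<Rightarrow> 'a" where
  "oth v k = (if fst (E!k) = v then snd (E!k) else fst (E!k))"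

lemma star_ends:
  assumes "k \<in> star E v"
  shows "oth v k \<in> V" "oth v k \<noteq> v" "(fst (E!k) = v \<and> snd (E!k) = oth v k) \<or> (snd (E!k) = v \<and> fst (E!k) = oth v k)"
proof -
  have k: "k < length E" "fst (E!k) = v \<or> snd (E!k) = v" using assms unfolding star_def by auto
  note e = og_edge[OF og k(1)]
  show "oth v k \<in> V" using e unfolding oth_def by auto
  show "oth v k \<noteq> v" using e k(2) unfolding oth_def by auto
  show "(fst (E!k) = v \<and> snd (E!k) = oth v k) \<or> (snd (E!k) = v \<and> fst (E!k) = oth v k)"
    using k(2) unfolding oth_def by auto
qed

lemma R_avoid: "\<forall>i\<in>{..<length E} - star E v. fst (E!i) \<noteq> v \<and> snd (E!i) \<noteq> v"
  unfolding star_def by auto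

lemma T1:
  assumes "k \<in> star E v"
  shows "\<not> conn E ({..<length E} - star E v) (fst (E!k)) (snd (E!k))"
proof
  let ?R = "{..<length E} - star E v"
  assume c: "conn E ?R (fst (E!k)) (snd (E!k))"
  note se = star_ends[OF assms]
  show False
  proof (cases "fst (E!k) = v \<and> snd (E!k) = oth v k")
    case True
    then have "conn E ?R v (oth v k)" using c by simp
    then have "oth v k = v" using conn_iso R_avoid by metis
    then show False using se(2) by simp
  next
    case False
    then have h: "snd (E!k) = v" "fst (E!k) = oth v k" using se(3) by auto
    then have "conn E ?R v (oth v k)" using conn_sym[OF c] by simp
    then have "oth v k = v" using conn_iso R_avoid by metis
    then show False using se(2) by simp
  qed
qed

lemma edge_conn_v:
  assumes "k \<in> star E v" "k \<in> T"
  shows "conn E T v (oth v k)"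
proof -
  note se = star_ends[OF assms(1)]
  have c: "conn E T (fst (E!k)) (snd (E!k))" using assms(2) by (rule conn_edge)
  show ?thesis
  proof (cases "fst (E!k) = v \<and> snd (E!k) = oth v k")
    case True then show ?thesis using c by simp
  next
    case False
    then have h: "snd (E!k) = v" "fst (E!k) = oth v k" using se(3) by auto
    then show ?thesis using conn_sym[OF c] by simp
  qed
qed

lemma T2:
  assumes "v \<in> V" "j \<in> star E v" "k \<in> star E v"
  shows "conn E (insert j ({..<length E} - star E v)) (fst (E!k)) (snd (E!k))"
proof -
  let ?R = "{..<length E} - star E v"
  let ?T = "insert j ?R"
  have cardv: "card {v} < 3" by simp
  have ab: "conn E (edges_in E (V - {v})) (oth v j) (oth v k)"
    using conn_minus[of "{v}" "oth v j" "oth v k"] assms(1) star_ends[OF assms(2)] star_ends[OF assms(3)] by simp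
  have sub: "edges_in E (V - {v}) \<subseteq> ?T" using edges_in_minus_v[of v] by auto
  have ab': "conn E ?T (oth v j) (oth v k)" using conn_mono[OF ab sub] .
  have vj: "conn E ?T v (oth v j)" using edge_conn_v[OF assms(2)] by simp
  have vk: "conn E ?T v (oth v k)" using rtranclp_trans[OF vj ab'] .
  show ?thesis
  proof (cases "fst (E!k) = v \<and> snd (E!k) = oth v k")
    case True then show ?thesis using vk by simp
  next
    case False
    then have h: "snd (E!k) = v" "fst (E!k) = oth v k" using star_ends(3)[OF assms(3)] by auto
    then show ?thesis using conn_sym[OF vk] by simp
  qed
qed


lemma common_vertex:
  assumes "v \<in> V" "R1 \<subseteq> {..<length E} - star E v" "e1 \<in> R1" "e2 \<in> ({..<length E} - star E v) - R1"
  shows "\<exists>c i1 i2. i1 \<in> R1 \<and> i2 \<in> ({..<length E} - star E v) - R1 \<and>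
      (c = fst (E!i1) \<or> c = snd (E!i1)) \<and> (c = fst (E!i2) \<or> c = snd (E!i2))"
proof (rule ccontr)
  let ?R = "{..<length E} - star E v"
  assume nc: "\<not> ?thesis"
  define A1 where "A1 = {z. \<exists>i\<in>R1. z = fst (E!i) \<or> z = snd (E!i)}"
  have e1R: "e1 \<in> ?R" using assms(2,3) by blast
  have x: "fst (E!e1) \<in> V - {v}" using og_edge(1)[OF og, of e1] e1R unfolding star_def by auto
  have y: "fst (E!e2) \<in> V - {v}" using og_edge(1)[OF og, of e2] assms(4) unfolding star_def by auto
  have c: "conn E (edges_in E (V - {v})) (fst (E!e1)) (fst (E!e2))"
    using conn_minus[of "{v}"] assms(1) x y by simp
  have "fst (E!e2) \<in> A1" using c
  proof (induction rule: rtranclp_induct)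
    case base then show ?case unfolding A1_def using assms(3) by blast
  next
    case (step y z)
    from step(2) obtain i where i: "i \<in> edges_in E (V - {v})" "{y,z} = {fst (E!i), snd (E!i)}"
      unfolding stp_def by blast
    have iR: "i \<in> ?R" using i(1) edges_in_minus_v[of v] by auto
    show ?case
    proof (cases "i \<in> R1")
      case True
      then show ?thesis using i(2) unfolding A1_def by (auto simp: doubleton_eq_iff)
    next
      case False
      obtain i' where i': "i' \<in> R1" "y = fst (E!i') \<or> y = snd (E!i')" using step.IH unfolding A1_def by blast
      have "y = fst (E!i) \<or> y = snd (E!i)" using i(2) by (auto simp: doubleton_eq_iff)
      then have False using nc i' iR False by blast
      then show ?thesis ..
    qed
  qed
  then show False using nc assms(4) unfolding A1_def by blast
qed

lemma T3:
  assumes "v \<in> V" "R1 \<subseteq> {..<length E} - star E v" "e1 \<in> R1" "e2 \<in> ({..<length E} - star E v) - R1"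
  shows "\<exists>e\<in>R1. \<exists>T\<subseteq>{..<length E} - star E v. e \<notin> T \<and> conn E T (fst (E!e)) (snd (E!e)) \<and>
     \<not> conn E (T \<inter> R1) (fst (E!e)) (snd (E!e))"
proof -
  let ?R = "{..<length E} - star E v"
  obtain c i1 i2 where ci: "i1 \<in> R1" "i2 \<in> ?R - R1" "c = fst (E!i1) \<or> c = snd (E!i1)" "c = fst (E!i2) \<or> c = snd (E!i2)"
    using common_vertex[OF assms] by blast
  have i1R: "i1 \<in> ?R" using ci(1) assms(2) by blast
  have i1l: "i1 < length E" and i2l: "i2 < length E" using i1R ci(2) by auto
  note e1 = og_edge[OF og i1l] and e2 = og_edge[OF og i2l]
  have av1: "fst (E!i1) \<noteq> v" "snd (E!i1) \<noteq> v" using i1R unfolding star_def by auto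
  have av2: "fst (E!i2) \<noteq> v" "snd (E!i2) \<noteq> v" using ci(2) unfolding star_def by auto
  define a where "a = (if fst (E!i1) = c then snd (E!i1) else fst (E!i1))"
  define b where "b = (if fst (E!i2) = c then snd (E!i2) else fst (E!i2))"
  have a: "a \<in> V" "a \<noteq> c" "a \<noteq> v" using e1 av1 ci(3) unfolding a_def by auto
  have b: "b \<in> V" "b \<noteq> c" "b \<noteq> v" using e2 av2 ci(4) unfolding b_def by auto
  have cV: "c \<in> V" "c \<noteq> v" using e1 av1 ci(3) by auto
  have cardX: "card {v,c} < 3" by (simp add: card_insert_if)
  have Xs: "{v,c} \<subseteq> V" using cV assms(1) by simp
  define W where "W = V - {v,c}"
  define T where "T = insert i2 (edges_in E W)"
  have ab: "conn E (edges_in E W) a b"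
    unfolding W_def using conn_minus[OF Xs cardX] a b by simp
  have TR: "T \<subseteq> ?R"
  proof -
    have "edges_in E W \<subseteq> edges_in E (V - {v})" unfolding W_def edges_in_def by auto
    then show ?thesis unfolding T_def using edges_in_minus_v[of v] ci(2) by auto
  qed
  have i1T: "i1 \<notin> T"
  proof -
    have "i1 \<noteq> i2" using ci(1,2) by blast
    moreover have "i1 \<notin> edges_in E W" using ci(3) unfolding W_def edges_in_def by auto
    ultimately show ?thesis unfolding T_def by blast
  qed
  have ab': "conn E T a b" using conn_mono[OF ab] unfolding T_def by blast
  have bc: "conn E T b c"
  proof -
    have cc: "conn E T (fst (E!i2)) (snd (E!i2))" by (rule conn_edge) (simp add: T_def)
    show ?thesis
    proof (cases "fst (E!i2) = c")
      case True then show ?thesis using conn_sym[OF cc] unfolding b_def by simp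
    next
      case False then have "snd (E!i2) = c" using ci(4) by simp
      then show ?thesis using cc False unfolding b_def by simp
    qed
  qed
  have ac: "conn E T a c" using rtranclp_trans[OF ab' bc] .
  have span: "conn E T (fst (E!i1)) (snd (E!i1))"
  proof (cases "fst (E!i1) = c")
    case True then show ?thesis using conn_sym[OF ac] unfolding a_def by simp
  next
    case False then have "snd (E!i1) = c" using ci(3) by simp
    then show ?thesis using ac False unfolding a_def by simp
  qed
  have avoid: "\<forall>i\<in>T \<inter> R1. fst (E!i) \<noteq> c \<and> snd (E!i) \<noteq> c"
  proof
    fix i assume "i \<in> T \<inter> R1"
    then have "i \<in> edges_in E W" unfolding T_def using ci(2) by auto
    then show "fst (E!i) \<noteq> c \<and> snd (E!i) \<noteq> c" unfolding edges_in_def W_def by auto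
  qed
  have nspan: "\<not> conn E (T \<inter> R1) (fst (E!i1)) (snd (E!i1))"
  proof
    assume h: "conn E (T \<inter> R1) (fst (E!i1)) (snd (E!i1))"
    show False
    proof (cases "fst (E!i1) = c")
      case True
      then have "conn E (T \<inter> R1) c (snd (E!i1))" using h by simp
      then have "snd (E!i1) = c" using conn_iso avoid by metis
      then show False using e1(3) True by simp
    next
      case False then have s: "snd (E!i1) = c" using ci(3) by simp
      then have "conn E (T \<inter> R1) c (fst (E!i1))" using conn_sym[OF h] by simp
      then have "fst (E!i1) = c" using conn_iso avoid by metis
      then show False using False by simp
    qed
  qed
  show ?thesis using ci(1) TR i1T span nspan by blast
qed

end

lemma locality:
  assumes "conn E T u w" "T \<subseteq> R" "conn E R u a"
  shows "conn E (T \<inter> {r\<in>R. conn E R (fst (E!r)) a}) u w \<and> conn E R w a"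
  using assms(1)
proof (induction rule: rtranclp_induct)
  case base then show ?case using assms(3) by simp
next
  case (step y z)
  let ?R1 = "{r\<in>R. conn E R (fst (E!r)) a}"
  from step(2) obtain i where i: "i \<in> T" "{y,z} = {fst (E!i), snd (E!i)}" unfolding stp_def by blast
  have iR: "i \<in> R" using i(1) assms(2) by blast
  have ya: "conn E R y a" using step.IH by blast
  have ee: "conn E R (fst (E!i)) (snd (E!i))" using iR by (rule conn_edge)
  have yz: "(y = fst (E!i) \<and> z = snd (E!i)) \<or> (y = snd (E!i) \<and> z = fst (E!i))"
    using i(2) by (auto simp: doubleton_eq_iff)
  have fa: "conn E R (fst (E!i)) a"
  proof (cases "y = fst (E!i)")
    case True then show ?thesis using ya by simp
  next
    case False then have "y = snd (E!i)" using yz by blast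
    then show ?thesis using rtranclp_trans[OF ee] ya by simp
  qed
  have za: "conn E R z a"
  proof (cases "z = fst (E!i)")
    case True then show ?thesis using fa by simp
  next
    case False then have "z = snd (E!i)" "y = fst (E!i)" using yz by blast+
    then show ?thesis using rtranclp_trans[OF conn_sym[OF ee]] fa by simp
  qed
  have "i \<in> T \<inter> ?R1" using i(1) iR fa by blast
  then have "stp E (T \<inter> ?R1) y z" using i(2) unfolding stp_def by blast
  then have "conn E (T \<inter> ?R1) u z" using step.IH by (meson rtranclp.rtrancl_into_rtrancl)
  then show ?case using za by blast
qed

lemma isoz:
  assumes "\<forall>r\<in>R. \<not> conn E R (fst (E!r)) z" "conn E R x z"
  shows "x = z"
proof (rule ccontr)
  assume ne: "x \<noteq> z"
  have "\<exists>i\<in>R. \<exists>y. {z,y} = {fst (E!i), snd (E!i)}"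
    by (rule conn_first_step[OF conn_sym[OF assms(2)]]) (use ne in simp)
  then obtain i y where i: "i \<in> R" "{z,y} = {fst (E!i), snd (E!i)}" by blast
  have "conn E R (fst (E!i)) z"
  proof (cases "fst (E!i) = z")
    case True then show ?thesis by simp
  next
    case False then have "snd (E!i) = z" using i(2) by (auto simp: doubleton_eq_iff)
    then show ?thesis using conn_edge[OF i(1), of E] by simp
  qed
  then show False using assms(1) i(1) by blast
qed

lemma star_of:
  assumes "D \<subseteq> {..<length E}" "R = {..<length E} - D"
    "\<forall>r\<in>R. \<not> conn E R (fst (E!r)) z"
    "\<forall>k\<in>D. conn E R (fst (E!k)) z \<or> conn E R (snd (E!k)) z"
  shows "D = star E z"
proof
  show "D \<subseteq> star E z"
  proof
    fix k assume k: "k \<in> D"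
    then have "conn E R (fst (E!k)) z \<or> conn E R (snd (E!k)) z" using assms(4) by blast
    then have "fst (E!k) = z \<or> snd (E!k) = z" using isoz[OF assms(3), of "fst (E!k)"] isoz[OF assms(3), of "snd (E!k)"] by blast
    then show "k \<in> star E z" using k assms(1) unfolding star_def by auto
  qed
  show "star E z \<subseteq> D"
  proof
    fix k assume k: "k \<in> star E z"
    show "k \<in> D"
    proof (rule ccontr)
      assume "k \<notin> D"
      then have kR: "k \<in> R" using k assms(2) unfolding star_def by auto
      have "conn E R (fst (E!k)) z"
      proof (cases "fst (E!k) = z")
        case True then show ?thesis by simp
      next
        case False then have "snd (E!k) = z" using k unfolding star_def by auto
        then show ?thesis using conn_edge[OF kR, of E] by simp
      qed
      then show False using assms(3) kR by blast
    qed
  qed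
qed

lemma H_star:
  assumes og: "ordered_graph V E" and D: "D \<subseteq> {..<length E}" "D \<noteq> {}"
    and Rdef: "R = {..<length E} - D"
    and H1: "\<forall>k\<in>D. \<not> conn E R (fst (E!k)) (snd (E!k))"
    and H2: "\<forall>j\<in>D. \<forall>k\<in>D. j \<noteq> k \<longrightarrow> conn E (insert j R) (fst (E!k)) (snd (E!k))"
    and H3: "\<forall>R1 e1 e2. R1 \<subseteq> R \<longrightarrow> e1 \<in> R1 \<longrightarrow> e2 \<in> R - R1 \<longrightarrow>
       (\<exists>e\<in>R1. \<exists>T\<subseteq>R. e \<notin> T \<and> conn E T (fst (E!e)) (snd (E!e)) \<and> \<not> conn E (T \<inter> R1) (fst (E!e)) (snd (E!e)))"
  shows "\<exists>w\<in>V. D = star E w"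
proof -
  obtain j0 where j0: "j0 \<in> D" using D(2) by blast
  define a where "a = fst (E!j0)"
  define b where "b = snd (E!j0)"
  have j0l: "j0 < length E" using j0 D(1) by auto
  have aV: "a \<in> V" and bV: "b \<in> V" using og_edge[OF og j0l] unfolding a_def b_def by auto
  have nab: "\<not> conn E R a b" using H1 j0 unfolding a_def b_def by blast
  have side: "(conn E R (fst (E!k)) a \<and> conn E R (snd (E!k)) b) \<or> (conn E R (fst (E!k)) b \<and> conn E R (snd (E!k)) a)"
    if k: "k \<in> D" for k
  proof (cases "k = j0")
    case True then show ?thesis unfolding a_def b_def by simp
  next
    case False
    let ?x = "fst (E!k)" let ?y = "snd (E!k)"
    have c: "conn E (insert j0 R) ?x ?y" by (rule H2[rule_format, OF j0 k]) (use False in auto)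
    have nxy: "\<not> conn E R ?x ?y" using H1 k by blast
    have nyx: "\<not> conn E R ?y ?x" using nxy conn_sym[of E R ?y ?x] by blast
    have c1: "conn E R ?x a \<or> conn E R ?x b" using conn_insert[OF c] nxy unfolding a_def b_def by blast
    have c2: "conn E R ?y a \<or> conn E R ?y b" using conn_insert[OF conn_sym[OF c]] nyx unfolding a_def b_def by blast
    have t1: "\<not> (conn E R ?x a \<and> conn E R ?y a)"
    proof
      assume h: "conn E R ?x a \<and> conn E R ?y a"
      then have "conn E R ?x ?y" using rtranclp_trans[OF conjunct1[OF h] conn_sym[OF conjunct2[OF h]]] by simp
      then show False using nxy by blast
    qed
    have t2: "\<not> (conn E R ?x b \<and> conn E R ?y b)"
    proof
      assume h: "conn E R ?x b \<and> conn E R ?y b"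
      then have "conn E R ?x ?y" using rtranclp_trans[OF conjunct1[OF h] conn_sym[OF conjunct2[OF h]]] by simp
      then show False using nxy by blast
    qed
    show ?thesis using c1 c2 t1 t2 by blast
  qed
  have bothz: "\<forall>k\<in>D. conn E R (fst (E!k)) z \<or> conn E R (snd (E!k)) z" if "z = a \<or> z = b" for z
    using side that by blast
  define R1 where "R1 = {r\<in>R. conn E R (fst (E!r)) a}"
  show ?thesis
  proof (cases "R1 = {}")
    case True
    then have "\<forall>r\<in>R. \<not> conn E R (fst (E!r)) a" unfolding R1_def by blast
    then have "D = star E a" using star_of[OF D(1) Rdef _ bothz[of a]] by simp
    then show ?thesis using aV by blast
  next
    case False
    then obtain e1 where e1: "e1 \<in> R1" by blast
    have "R - R1 = {}"
    proof (rule ccontr)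
      assume "R - R1 \<noteq> {}"
      then obtain e2 where e2: "e2 \<in> R - R1" by blast
      have "R1 \<subseteq> R" unfolding R1_def by blast
      from H3[rule_format, OF this e1 e2]
      obtain e T where eT: "e \<in> R1" "T \<subseteq> R" "e \<notin> T" "conn E T (fst (E!e)) (snd (E!e))"
        "\<not> conn E (T \<inter> R1) (fst (E!e)) (snd (E!e))"
        by blast
      have "conn E R (fst (E!e)) a" using eT(1) unfolding R1_def by blast
      note ea = this
      from locality[OF eT(4) eT(2) ea]
      have "conn E (T \<inter> R1) (fst (E!e)) (snd (E!e))" unfolding R1_def by (rule conjunct1)
      then show False using eT(5) by blast
    qed
    then have allR: "\<forall>r\<in>R. conn E R (fst (E!r)) a" unfolding R1_def by blast
    have "\<forall>r\<in>R. \<not> conn E R (fst (E!r)) b"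
    proof (intro ballI notI)
      fix r assume r: "r \<in> R" "conn E R (fst (E!r)) b"
      have ra: "conn E R (fst (E!r)) a" using allR r(1) by blast
      have "conn E R a b" using rtranclp_trans[OF conn_sym[OF ra] r(2)] by simp
      then show False using nab by blast
    qed
    then have "D = star E b" using star_of[OF D(1) Rdef _ bothz[of b]] by simp
    then show ?thesis using bV by blast
  qed
qed

lemma vertex_star:
  assumes ogG: "ordered_graph VG EG" and ogH: "ordered_graph VH EH"
    and len: "length EG = length EH" and kc: "k_connected 3 VG EG"
    and M: "M1 EG = M1 EH" and v: "v \<in> VG"
  shows "\<exists>w\<in>VH. star EG v = star EH w"
proof -
  interpret G3 VG EG using ogG kc by unfold_locales
  define D where "D = star EG v"
  define R where "R = {..<length EG} - D"
  have Dsub: "D \<subseteq> {..<length EH}" unfolding D_def star_def using len by auto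
  have Rdef: "R = {..<length EH} - D" unfolding R_def using len by simp
  have finR: "finite R" unfolding R_def by simp
  have RsubG: "R \<subseteq> {..<length EG}" unfolding R_def by blast
  have RsubH: "R \<subseteq> {..<length EH}" using RsubG len by simp
  have Dne: "D \<noteq> {}" unfolding D_def using star_ne[OF v] .
  have H1: "\<forall>k\<in>D. \<not> conn EH R (fst (EH!k)) (snd (EH!k))"
  proof (intro ballI notI)
    fix k assume k: "k \<in> D" and c: "conn EH R (fst (EH!k)) (snd (EH!k))"
    have kl: "k < length EH" using k Dsub by auto
    have kR: "k \<notin> R" using k unfolding R_def by blast
    have "conn EG R (fst (EG!k)) (snd (EG!k))"
      by (rule span_transfer[OF len[symmetric] M[symmetric] finR RsubH kl kR c])
    then show False using T1[of k v] k unfolding D_def R_def by blast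
  qed
  have H2: "\<forall>j\<in>D. \<forall>k\<in>D. j \<noteq> k \<longrightarrow> conn EH (insert j R) (fst (EH!k)) (snd (EH!k))"
  proof (intro ballI impI)
    fix j k assume j: "j \<in> D" and k: "k \<in> D" and jk: "j \<noteq> k"
    have kl: "k < length EG" using k unfolding D_def star_def by auto
    have jl: "j < length EG" using j unfolding D_def star_def by auto
    have kR: "k \<notin> insert j R" using k jk unfolding R_def by blast
    have sub: "insert j R \<subseteq> {..<length EG}" using RsubG jl by auto
    have "conn EG (insert j R) (fst (EG!k)) (snd (EG!k))"
      using T2[OF v, of j k] j k unfolding D_def R_def by blast
    then show "conn EH (insert j R) (fst (EH!k)) (snd (EH!k))"
      by (rule span_transfer[OF len M _ sub kl kR, rotated]) (simp add: finR)
  qed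
  have H3: "\<forall>R1 e1 e2. R1 \<subseteq> R \<longrightarrow> e1 \<in> R1 \<longrightarrow> e2 \<in> R - R1 \<longrightarrow>
       (\<exists>e\<in>R1. \<exists>T\<subseteq>R. e \<notin> T \<and> conn EH T (fst (EH!e)) (snd (EH!e)) \<and> \<not> conn EH (T \<inter> R1) (fst (EH!e)) (snd (EH!e)))"
  proof (intro allI impI)
    fix R1 e1 e2 assume R1: "R1 \<subseteq> R" and e1: "e1 \<in> R1" and e2: "e2 \<in> R - R1"
    have "\<exists>e\<in>R1. \<exists>T\<subseteq>{..<length EG} - star EG v. e \<notin> T \<and> conn EG T (fst (EG!e)) (snd (EG!e)) \<and>
     \<not> conn EG (T \<inter> R1) (fst (EG!e)) (snd (EG!e))"
      by (rule T3[OF v]) (use R1 e1 e2 in \<open>simp_all add: R_def D_def\<close>)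
    then obtain e T where eT: "e \<in> R1" "T \<subseteq> R" "e \<notin> T" "conn EG T (fst (EG!e)) (snd (EG!e))"
      "\<not> conn EG (T \<inter> R1) (fst (EG!e)) (snd (EG!e))"
      unfolding R_def D_def by blast
    have el: "e < length EG" using eT(1) R1 RsubG by auto
    have finT: "finite T" using eT(2) finR finite_subset by blast
    have TsubG: "T \<subseteq> {..<length EG}" using eT(2) RsubG by blast
    have c1: "conn EH T (fst (EH!e)) (snd (EH!e))"
      by (rule span_transfer[OF len M finT TsubG el eT(3) eT(4)])
    have c2: "\<not> conn EH (T \<inter> R1) (fst (EH!e)) (snd (EH!e))"
    proof
      assume h: "conn EH (T \<inter> R1) (fst (EH!e)) (snd (EH!e))"
      have "conn EG (T \<inter> R1) (fst (EG!e)) (snd (EG!e))"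
        by (rule span_transfer[OF len[symmetric] M[symmetric] _ _ _ _ h])
           (use finT TsubG el eT(3) len in auto)
      then show False using eT(5) by blast
    qed
    show "\<exists>e\<in>R1. \<exists>T\<subseteq>R. e \<notin> T \<and> conn EH T (fst (EH!e)) (snd (EH!e)) \<and> \<not> conn EH (T \<inter> R1) (fst (EH!e)) (snd (EH!e))"
      using eT(1,2,3) c1 c2 by blast
  qed
  have "\<exists>w\<in>VH. D = star EH w" by (rule H_star[OF ogH Dsub Dne Rdef H1 H2 H3])
  then show ?thesis unfolding D_def .
qed


theorem mainTheorem5:
  fixes VG :: "'a set" and EG :: "('a \<times> 'a) list"
    and VH :: "'b set" and EH :: "('b \<times> 'b) list"
    and m :: nat
  assumes "ordered_graph VG EG" and "ordered_graph VH EH"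
    and "card VG \<ge> 3" and "card VH \<ge> 3"
    and "length EG = m" and "length EH = m"
    and "k_connected 3 VG EG"
    and "no_isolated VH EH"
    and "M1 EG = M1 EH"
  shows "\<exists>\<sigma>. bij_betw \<sigma> VG VH \<and>
     (\<forall>k < m. \<forall>i j. EG ! k = (i, j) \<longrightarrow> {fst (EH ! k), snd (EH ! k)} = {\<sigma> i, \<sigma> j})"
proof -
  note ogG = assms(1) and ogH = assms(2) and kc = assms(7) and M = assms(9)
  have len: "length EG = length EH" using assms(5,6) by simp
  interpret G3 VG EG using ogG kc by unfold_locales
  define \<sigma> where "\<sigma> = (\<lambda>v. SOME w. w \<in> VH \<and> star EG v = star EH w)"
  have \<sigma>: "\<sigma> v \<in> VH \<and> star EG v = star EH (\<sigma> v)" if v: "v \<in> VG" for v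
  proof -
    have "\<exists>w. w \<in> VH \<and> star EG v = star EH w"
      using vertex_star[OF ogG ogH len kc M v] by blast
    then show ?thesis unfolding \<sigma>_def by (rule someI_ex)
  qed
  have inj: "inj_on \<sigma> VG"
  proof (rule inj_onI)
    fix u v assume u: "u \<in> VG" and v: "v \<in> VG" and e: "\<sigma> u = \<sigma> v"
    have "star EG u = star EG v" using \<sigma>[OF u] \<sigma>[OF v] e by simp
    then show "u = v" using star_inj[OF u v] by blast
  qed
  have edge: "{fst (EH ! k), snd (EH ! k)} = {\<sigma> (fst (EG!k)), \<sigma> (snd (EG!k))}" if k: "k < m" for k
  proof -
    let ?i = "fst (EG!k)" let ?j = "snd (EG!k)"
    have kG: "k < length EG" using k assms(5) by simp
    note e = og_edge[OF ogG kG]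
    have ki: "k \<in> star EH (\<sigma> ?i)" using \<sigma>[OF e(1)] kG unfolding star_def by auto
    have kj: "k \<in> star EH (\<sigma> ?j)" using \<sigma>[OF e(2)] kG unfolding star_def by auto
    have ne: "\<sigma> ?i \<noteq> \<sigma> ?j" using inj e unfolding inj_on_def by blast
    have "\<sigma> ?i \<in> {fst (EH ! k), snd (EH ! k)}" "\<sigma> ?j \<in> {fst (EH ! k), snd (EH ! k)}"
      using ki kj unfolding star_def by auto
    then show ?thesis using ne by auto
  qed
  have img: "\<sigma> ` VG = VH"
  proof
    show "\<sigma> ` VG \<subseteq> VH" using \<sigma> by blast
    show "VH \<subseteq> \<sigma> ` VG"
    proof
      fix w assume w: "w \<in> VH"
      obtain i j where ij: "(i,j) \<in> set EH" "w = i \<or> w = j"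
        using assms(8) w unfolding no_isolated_def by blast
      then obtain k where k: "k < length EH" "EH!k = (i,j)" by (metis in_set_conv_nth)
      have km: "k < m" using k assms(6) by simp
      have kG: "k < length EG" using km assms(5) by simp
      note e = og_edge[OF ogG kG]
      have "w \<in> {fst (EH ! k), snd (EH ! k)}" using ij(2) k(2) by auto
      then have "w \<in> {\<sigma> (fst (EG!k)), \<sigma> (snd (EG!k))}" using edge[OF km] by simp
      then show "w \<in> \<sigma> ` VG" using e by auto
    qed
  qed
  have "bij_betw \<sigma> VG VH" using inj img by (simp add: bij_betw_def)
  moreover have "\<forall>k < m. \<forall>i j. EG ! k = (i, j) \<longrightarrow> {fst (EH ! k), snd (EH ! k)} = {\<sigma> i, \<sigma> j}"
    using edge by simp
  ultimately show ?thesis by blast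
qed

end
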